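(* Let $b\ge1$, $1\le a\le b$, $t\ge0$ be integers and $d=2t+1$. Let $\nu^{\text{off-diag}}$ be the number of pairs $(k,q)$ with $k$ odd, $1\le k<d$, $-k\le q\le k$, $q\equiv 2a-1\pmod{2b}$. Then $\nu^{\text{off-diag}}=\tfrac{t^2}{b}+\tfrac{t}{b}+\tfrac{2a(a-b-1)+b+1}{2b}+c$, where $c=\tfrac{1}{2b}[t+1-a]_b^2+\tfrac{1}{2b}[t+1-a]_b\big(b-2-2[t-a]_b\big)+\tfrac{1}{2b}[t+a]_b\big(b-2-2[a+t-1]_b+[a+t]_b\big)$, and $0\le c\le 2b$.
   Context: For an integer $x$ and positive integer $y$, $[x]_y:=x\bmod y\in\{0,\dots,y-1\}$. *)

theory Defs
  imports Complex_Main "HOL-Number_Theory.Cong"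
begin

definition nu_offdiag :: "int \<Rightarrow> int \<Rightarrow> int \<Rightarrow> nat" where
  "nu_offdiag a b d = card ({(k, q). odd k \<and> 1 \<le> k \<and> k < d \<and> - k \<le> q \<and> q \<le> k
                                    \<and> [q = 2 * a - 1] (mod (2 * b))} :: (int \<times> int) set)"

end

theory Submission
  imports Defs
begin

lemma mod_char:
  fixes x r b k :: int
  assumes "0 \<le> r" "r < b" "x = r + b * k"
  shows "x mod b = r"
  using assms by simp

lemma mod_succ:
  fixes u b :: int
  assumes "b \<ge> 1"
  shows "((u+1) mod b = u mod b + 1) \<or> (u mod b = b - 1 \<and> (u+1) mod b = 0)"
proof -
  have "(u+1) mod b = (u mod b + 1) mod b" by (simp add: mod_add_left_eq)
  moreover have "0 \<le> u mod b" "u mod b < b" using assms by auto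
  ultimately show ?thesis
    by (cases "u mod b + 1 = b") auto
qed

lemma le_div_iff_int:
  fixes m h b :: int
  assumes "b \<ge> 1"
  shows "b * m \<le> h \<longleftrightarrow> m \<le> h div b"
proof
  assume A: "b * m \<le> h"
  show "m \<le> h div b"
  proof (rule ccontr)
    assume "\<not> m \<le> h div b"
    hence "h div b + 1 \<le> m" by simp
    hence "b * (h div b + 1) \<le> b * m" using assms by (simp add: mult_left_mono)
    moreover have "h = b * (h div b) + h mod b" by simp
    moreover have "h mod b < b" using assms by simp
    ultimately show False using A by (simp add: algebra_simps)
  qed
next
  assume "m \<le> h div b"
  hence "b * m \<le> b * (h div b)" using assms by (simp add: mult_left_mono)
  moreover have "h = b * (h div b) + h mod b" by simp
  moreover have "0 \<le> h mod b" using assms by simp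
  ultimately show "b * m \<le> h" by linarith
qed

definition QQ :: "int \<Rightarrow> int \<Rightarrow> int \<Rightarrow> int set" where
  "QQ a b t = {q. - (2*t+1) \<le> q \<and> q \<le> 2*t+1 \<and> [q = 2 * a - 1] (mod (2 * b))}"

lemma QQ_img:
  fixes a b t :: int
  assumes "b \<ge> 1"
  shows "QQ a b t = (\<lambda>m. 2*a-1+2*b*m) ` {- ((t+a) div b) .. (t+1-a) div b}"
proof (intro set_eqI iffI)
  fix q assume "q \<in> QQ a b t"
  hence q: "- (2*t+1) \<le> q" "q \<le> 2*t+1" "[q = 2 * a - 1] (mod (2 * b))"
    unfolding QQ_def by auto
  from q(3) have "(2*b) dvd (q - (2*a-1))"
    by (simp add: cong_iff_dvd_diff)
  then obtain m where m: "q - (2*a-1) = 2*b*m" by (auto elim: dvdE)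
  hence qm: "q = 2*a-1+2*b*m" by simp
  have "b*m \<le> t+1-a" using q qm by linarith
  hence h1: "m \<le> (t+1-a) div b" using le_div_iff_int assms by blast
  have "b*(-m) \<le> t+a" using q qm by linarith
  hence "-m \<le> (t+a) div b" using le_div_iff_int assms by blast
  thus "q \<in> (\<lambda>m. 2*a-1+2*b*m) ` {- ((t+a) div b) .. (t+1-a) div b}"
    using h1 qm by auto
next
  fix q assume "q \<in> (\<lambda>m. 2*a-1+2*b*m) ` {- ((t+a) div b) .. (t+1-a) div b}"
  then obtain m where m0: "m \<in> {- ((t+a) div b) .. (t+1-a) div b}" "q = 2*a-1+2*b*m"
    by blast
  hence m: "q = 2*a-1+2*b*m" "- ((t+a) div b) \<le> m" "m \<le> (t+1-a) div b" by auto
  have "b*m \<le> t+1-a" using m(3) le_div_iff_int assms by blast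
  moreover have "b*(-m) \<le> t+a" using m(2) le_div_iff_int[of b "-m" "t+a"] assms by linarith
  moreover have "[q = 2 * a - 1] (mod (2 * b))" using m(1)
    by (simp add: cong_iff_dvd_diff)
  ultimately show "q \<in> QQ a b t" unfolding QQ_def using m(1) by auto
qed

lemma card_QQ:
  fixes a b t :: int
  assumes "b \<ge> 1" "t \<ge> 0" "1 \<le> a" "a \<le> b"
  shows "int (card (QQ a b t)) = (t+1-a) div b + (t+a) div b + 1"
proof -
  have inj: "inj_on (\<lambda>m. 2*a-1+2*b*m) {- ((t+a) div b) .. (t+1-a) div b}"
    using assms by (auto simp: inj_on_def)
  have "(t+1-a) div b \<ge> -1"
  proof -
    have "b*(-1) \<le> t+1-a" using assms by linarith
    thus ?thesis using le_div_iff_int assms by blast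
  qed
  moreover have "(t+a) div b \<ge> 0" using le_div_iff_int[of b 0 "t+a"] assms by simp
  ultimately show ?thesis
    using assms QQ_img card_image[OF inj] by simp
qed

definition SS :: "int \<Rightarrow> int \<Rightarrow> int \<Rightarrow> (int \<times> int) set" where
  "SS a b d = {(k, q). odd k \<and> 1 \<le> k \<and> k < d \<and> - k \<le> q \<and> q \<le> k
                                    \<and> [q = 2 * a - 1] (mod (2 * b))}"

lemma SS_fin: "finite (SS a b d)"
proof -
  have "SS a b d \<subseteq> {0..d} \<times> {-d..d}" unfolding SS_def by auto
  thus ?thesis by (rule finite_subset) auto
qed

lemma SS_step:
  fixes t :: int
  assumes "t \<ge> 0"
  shows "SS a b (2*(t+1)+1) = SS a b (2*t+1) \<union> ({2*t+1} \<times> QQ a b t)"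
proof (intro set_eqI iffI)
  fix x assume "x \<in> SS a b (2*(t+1)+1)"
  then obtain k q where x: "x = (k,q)" "odd k" "1 \<le> k" "k < 2*(t+1)+1" "-k \<le> q" "q \<le> k"
    "[q = 2 * a - 1] (mod (2 * b))" unfolding SS_def by auto
  show "x \<in> SS a b (2*t+1) \<union> ({2*t+1} \<times> QQ a b t)"
  proof (cases "k < 2*t+1")
    case True thus ?thesis using x unfolding SS_def by auto
  next
    case False
    have "k \<noteq> 2*t+2" using x(2) by auto
    moreover have "k = 2*t+1 \<or> k = 2*t+2" using False x(4) by arith
    ultimately have "k = 2*t+1" by blast
    thus ?thesis using x unfolding QQ_def by auto
  qed
next
  fix x assume "x \<in> SS a b (2*t+1) \<union> ({2*t+1} \<times> QQ a b t)"
  thus "x \<in> SS a b (2*(t+1)+1)" unfolding SS_def QQ_def by auto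
qed

lemma SS_disj: "SS a b (2*t+1) \<inter> ({2*t+1} \<times> QQ a b t) = {}"
  unfolding SS_def by auto

definition CC :: "int \<Rightarrow> int \<Rightarrow> int \<Rightarrow> int" where
  "CC a b t = ((t + 1 - a) mod b)^2 + ((t + 1 - a) mod b) * (b - 2 - 2 * ((t - a) mod b))
     + ((t + a) mod b) * (b - 2 - 2 * ((a + t - 1) mod b) + (a + t) mod b)"

lemma key_step:
  fixes b x x1 x2 y y1 y2 :: int
  assumes "x1 = x+1 \<or> (x = b-1 \<and> x1 = 0)" "x2 = x1+1 \<or> (x1 = b-1 \<and> x2 = 0)"
    "y1 = y+1 \<or> (y = b-1 \<and> y1 = 0)" "y2 = y1+1 \<or> (y1 = b-1 \<and> y2 = 0)"
  shows "x2^2 + x2*(b-2-2*x1) + y2*(b-2-2*y1+y2) - (x1^2 + x1*(b-2-2*x) + y1*(b-2-2*y+y1))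
         = 2*b - 2 - 2*x1 - 2*y1"
  using assms by (auto simp: algebra_simps power2_eq_square)

lemma main_int:
  fixes a b :: int and n :: nat
  assumes "b \<ge> 1" "1 \<le> a" "a \<le> b"
  shows "2*b*int (card (SS a b (2*int n+1))) = 2*(int n)^2 + 2*int n + 2*a*(a-b-1)+b+1 + CC a b (int n)"
proof (induction n)
  case 0
  have e: "SS a b 1 = {}" unfolding SS_def by auto
  have c0: "CC a b 0 = ((1-a) mod b)^2 + ((1-a) mod b)*(b-2-2*((-a) mod b)) + (a mod b)*(b-2-2*((a-1) mod b)+ a mod b)"
    unfolding CC_def by simp
  have "0 = 2*a*(a-b-1)+b+1 + CC a b 0"
  proof (cases "a = b")
    case True
    have h1: "a mod b = 0" using True by simp
    have h2: "(a-1) mod b = b-1" using True assms by (intro mod_char[where k=0]) auto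
    have h3: "(-a) mod b = 0" using True by simp
    show ?thesis
    proof (cases "b = 1")
      case True
      have h4: "(1-a) mod b = 0" using True \<open>a = b\<close> by simp
      show ?thesis unfolding c0 h1 h2 h3 h4 using True \<open>a = b\<close> by simp
    next
      case False
      have h4: "(1-a) mod b = 1" using False \<open>a = b\<close> assms by (intro mod_char[where k="-1"]) auto
      show ?thesis unfolding c0 h1 h2 h3 h4 using \<open>a = b\<close> by (simp add: algebra_simps power2_eq_square)
    qed
  next
    case False
    have h1: "a mod b = a" using False assms by (intro mod_char[where k=0]) auto
    have h2: "(a-1) mod b = a-1" using False assms by (intro mod_char[where k=0]) auto
    have h3: "(-a) mod b = b-a" using False assms by (intro mod_char[where k="-1"]) auto
    show ?thesis
    proof (cases "a = 1")
      case True
      have h4: "(1-a) mod b = 0" using True by simp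
      show ?thesis unfolding c0 h1 h2 h3 h4 using True by (simp add: algebra_simps power2_eq_square)
    next
      case F2: False
      have h4: "(1-a) mod b = b+1-a" using F2 False assms by (intro mod_char[where k="-1"]) auto
      show ?thesis unfolding c0 h1 h2 h3 h4 by (simp add: algebra_simps power2_eq_square)
    qed
  qed
  thus ?case using e by simp
next
  case (Suc n)
  define t where "t = int n"
  have t0: "t \<ge> 0" unfolding t_def by simp
  have st: "int (Suc n) = t + 1" unfolding t_def by simp
  have card: "card (SS a b (2*(t+1)+1)) = card (SS a b (2*t+1)) + card (QQ a b t)"
  proof -
    have "finite (QQ a b t)" using QQ_img assms by simp
    hence "finite ({2*t+1} \<times> QQ a b t)" by simp
    hence "card (SS a b (2*t+1) \<union> ({2*t+1} \<times> QQ a b t)) = card (SS a b (2*t+1)) + card ({2*t+1} \<times> QQ a b t)"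
      using SS_disj card_Un_disjoint[OF SS_fin] by blast
    thus ?thesis unfolding SS_step[OF t0] by (simp add: card_cartesian_product)
  qed
  have IH: "2*b*int (card (SS a b (2*t+1))) = 2*t^2 + 2*t + 2*a*(a-b-1)+b+1 + CC a b t"
    using Suc.IH unfolding t_def .
  have cq: "int (card (QQ a b t)) = (t+1-a) div b + (t+a) div b + 1"
    using card_QQ assms t0 by simp
  define x where "x = (t-a) mod b"
  define x1 where "x1 = (t+1-a) mod b"
  define x2 where "x2 = (t+2-a) mod b"
  define y where "y = (t+a-1) mod b"
  define y1 where "y1 = (t+a) mod b"
  define y2 where "y2 = (t+a+1) mod b"
  have d1: "b * ((t+1-a) div b) = t+1-a-x1" unfolding x1_def
    by (metis add_diff_cancel_right' div_mult_mod_eq mult.commute)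
  have d2: "b * ((t+a) div b) = t+a-y1" unfolding y1_def
    by (metis add_diff_cancel_right' div_mult_mod_eq mult.commute)
  have r1: "x1 = x+1 \<or> (x = b-1 \<and> x1 = 0)"
    using mod_succ[of b "t-a"] assms unfolding x_def x1_def by (simp add: algebra_simps)
  have r2: "x2 = x1+1 \<or> (x1 = b-1 \<and> x2 = 0)"
    using mod_succ[of b "t+1-a"] assms unfolding x2_def x1_def by (simp add: algebra_simps)
  have r3: "y1 = y+1 \<or> (y = b-1 \<and> y1 = 0)"
    using mod_succ[of b "t+a-1"] assms unfolding y_def y1_def by (simp add: algebra_simps)
  have r4: "y2 = y1+1 \<or> (y1 = b-1 \<and> y2 = 0)"
    using mod_succ[of b "t+a"] assms unfolding y2_def y1_def by (simp add: algebra_simps)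
  have c0: "CC a b t = x1^2 + x1*(b-2-2*x) + y1*(b-2-2*y+y1)"
    unfolding CC_def x_def x1_def y_def y1_def by (simp add: algebra_simps)
  have c1: "CC a b (t+1) = x2^2 + x2*(b-2-2*x1) + y2*(b-2-2*y1+y2)"
    unfolding CC_def x2_def x1_def y2_def y1_def by (simp add: algebra_simps)
  have k: "CC a b (t+1) - CC a b t = 2*b - 2 - 2*x1 - 2*y1"
    unfolding c0 c1 by (rule key_step[OF r1 r2 r3 r4])
  have "2*b*int (card (SS a b (2*(t+1)+1))) = 2*b*int (card (SS a b (2*t+1))) + 2*b*int (card (QQ a b t))"
    unfolding card by (simp add: algebra_simps)
  also have "... = 2*t^2 + 2*t + 2*a*(a-b-1)+b+1 + CC a b t + 2*(t+1-a-x1) + 2*(t+a-y1) + 2*b"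
    unfolding IH cq using d1 d2 by (simp add: algebra_simps)
  also have "... = 2*(t+1)^2 + 2*(t+1) + 2*a*(a-b-1)+b+1 + CC a b (t+1)"
    using k by (simp add: algebra_simps power2_eq_square)
  finally show ?case unfolding st .
qed

lemma CC_bounds:
  fixes a b t :: int
  assumes "b \<ge> 1"
  shows "0 \<le> CC a b t \<and> CC a b t \<le> 2*b*b"
proof -
  define x where "x = (t-a) mod b"
  define x1 where "x1 = (t+1-a) mod b"
  define y where "y = (t+a-1) mod b"
  define y1 where "y1 = (t+a) mod b"
  have r1: "x1 = x+1 \<or> (x = b-1 \<and> x1 = 0)"
    using mod_succ[of b "t-a"] assms unfolding x_def x1_def by (simp add: algebra_simps)
  have r3: "y1 = y+1 \<or> (y = b-1 \<and> y1 = 0)"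
    using mod_succ[of b "t+a-1"] assms unfolding y_def y1_def by (simp add: algebra_simps)
  have c0: "CC a b t = x1^2 + x1*(b-2-2*x) + y1*(b-2-2*y+y1)"
    unfolding CC_def x_def x1_def y_def y1_def by (simp add: algebra_simps)
  have bx: "0 \<le> x1" "x1 < b" "0 \<le> y1" "y1 < b" using assms unfolding x1_def y1_def by auto
  have px: "x1^2 + x1*(b-2-2*x) = x1 * (b - x1)"
    using r1 by (auto simp: algebra_simps power2_eq_square)
  have py: "y1*(b-2-2*y+y1) = y1 * (b - y1)"
    using r3 by (auto simp: algebra_simps power2_eq_square)
  have g: "0 \<le> u * (b - u) \<and> u * (b - u) \<le> b * b" if "0 \<le> u" "u < b" for u :: int
  proof
    show "0 \<le> u * (b - u)" using that by simp
    show "u * (b - u) \<le> b * b" using that by (intro mult_mono) auto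
  qed
  show ?thesis unfolding c0 px py using g[OF bx(1,2)] g[OF bx(3,4)] by (simp add: algebra_simps)
qed

theorem lemmaS12:
  fixes a b t :: int
  assumes "b \<ge> 1" and "1 \<le> a" and "a \<le> b" and "t \<ge> 0"
  shows "let d = 2 * t + 1;
             c = (1 / (2 * real_of_int b)) * of_int (((t + 1 - a) mod b)^2)
               + (1 / (2 * real_of_int b)) * of_int (((t + 1 - a) mod b) * (b - 2 - 2 * ((t - a) mod b)))
               + (1 / (2 * real_of_int b)) * of_int (((t + a) mod b) * (b - 2 - 2 * ((a + t - 1) mod b) + (a + t) mod b))
         in real (nu_offdiag a b d)
              = of_int (t^2) / of_int b + of_int t / of_int b
                + of_int (2 * a * (a - b - 1) + b + 1) / (2 * real_of_int b) + c
            \<and> 0 \<le> c \<and> c \<le> 2 * of_int b"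
proof -
  have tn: "t = int (nat t)" using assms by simp
  have M: "2*b*int (nu_offdiag a b (2*t+1)) = 2*t^2 + 2*t + 2*a*(a-b-1)+b+1 + CC a b t"
    using main_int[OF assms(1-3), of "nat t"] tn unfolding nu_offdiag_def SS_def by simp
  have cdef: "(1 / (2 * real_of_int b)) * of_int (((t + 1 - a) mod b)^2)
               + (1 / (2 * real_of_int b)) * of_int (((t + 1 - a) mod b) * (b - 2 - 2 * ((t - a) mod b)))
               + (1 / (2 * real_of_int b)) * of_int (((t + a) mod b) * (b - 2 - 2 * ((a + t - 1) mod b) + (a + t) mod b))
        = (1 / (2 * real_of_int b)) * real_of_int (CC a b t)"
    unfolding CC_def by (simp only: of_int_add distrib_left)
  have bp: "real_of_int b > 0" using assms by simp
  have MR: "2*real_of_int b*real (nu_offdiag a b (2*t+1)) = real_of_int (2*t^2 + 2*t + 2*a*(a-b-1)+b+1 + CC a b t)"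
    using arg_cong[OF M, of real_of_int] by simp
  have B: "0 \<le> real_of_int (CC a b t)" "real_of_int (CC a b t) \<le> 2*real_of_int b*real_of_int b"
  proof -
    have "CC a b t \<le> 2*b*b" "0 \<le> CC a b t" using CC_bounds[OF assms(1), of a t] by auto
    hence "real_of_int (CC a b t) \<le> real_of_int (2*b*b)" "0 \<le> real_of_int (CC a b t)"
      by (simp only: of_int_le_iff)+
    thus "0 \<le> real_of_int (CC a b t)" "real_of_int (CC a b t) \<le> 2*real_of_int b*real_of_int b" by auto
  qed
  have cdef2: "(1 / (2 * real_of_int b)) * real_of_int (CC a b t) = real_of_int (CC a b t) / (2 * real_of_int b)"
    by simp
  show ?thesis unfolding Let_def cdef cdef2
  proof (intro conjI)
    show "real (nu_offdiag a b (2 * t + 1)) =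
      real_of_int (t\<^sup>2) / real_of_int b + real_of_int t / real_of_int b +
      real_of_int (2 * a * (a - b - 1) + b + 1) / (2 * real_of_int b) +
      real_of_int (CC a b t) / (2 * real_of_int b)"
    proof -
      have "real (nu_offdiag a b (2 * t + 1)) = (2*real_of_int b*real (nu_offdiag a b (2*t+1))) / (2*real_of_int b)"
        using bp by simp
      also have "... = real_of_int (2*t^2 + 2*t + 2*a*(a-b-1)+b+1 + CC a b t) / (2*real_of_int b)"
        unfolding MR ..
      also have "... = real_of_int (t\<^sup>2) / real_of_int b + real_of_int t / real_of_int b +
      real_of_int (2 * a * (a - b - 1) + b + 1) / (2 * real_of_int b) +
      real_of_int (CC a b t) / (2 * real_of_int b)"
        using bp by (simp add: field_simps)
      finally show ?thesis .
    qed
    show "0 \<le> real_of_int (CC a b t) / (2 * real_of_int b)" using B bp by simp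
    show "real_of_int (CC a b t) / (2 * real_of_int b) \<le> 2 * real_of_int b"
      using B bp by (simp add: field_simps)
  qed
qed

end
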